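(* In the general model, the random measure $\mu$ is either almost surely absolutely continuous with respect to Lebesgue measure, or almost surely purely singular with respect to Lebesgue measure.
   Context: General model. Let $\ell\ge 2$ and let $T=\{1,\dots,\ell\}^*$ be the set of finite words over $\{1,\dots,\ell\}$ (the rooted $\ell$-regular tree; $v|j$ is the prefix of $v$ of length $j$). Let $D\subset\mathbb{R}$ be a finite set and $\eta=\sum_{d\in D}p_d\delta_d$ a probability measure on $D$. Let $\{a_v\}_{v\in T,\,|v|\ge 1}$ be i.i.d. random variables with law $\eta$. Fix $\lambda\in(0,1)$. For $\omega\in\{1,\dots,\ell\}^{\mathbb{N}}$ put $f(\omega)=\sum_{j\ge1}a_{\omega|j}\lambda^j$. The random probability measure $\mu$ is the image under $f$ of the uniform product measure $(\frac1\ell,\dots,\frac1\ell)^{\mathbb{N}}$ on $\{1,\dots,\ell\}^{\mathbb{N}}$. *)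

theory Defs
  imports "HOL-Probability.Probability"
begin

text \<open>Vertices of the rooted l-regular tree other than the root: nonempty finite
  words over the alphabet {1..l}.\<close>
definition tree_vertices :: "nat \<Rightarrow> nat list set" where
  "tree_vertices l = {v. v \<noteq> [] \<and> set v \<subseteq> {1..l}}"

definition label_space :: "nat \<Rightarrow> real pmf \<Rightarrow> (nat list \<Rightarrow> real) measure" where
  "label_space l eta = PiM (tree_vertices l) (\<lambda>_. measure_pmf eta)"

definition symbol_space :: "nat \<Rightarrow> (nat \<Rightarrow> nat) measure" where
  "symbol_space l = PiM UNIV (\<lambda>_. measure_pmf (pmf_of_set {1..l}))"

definition prefix_of :: "(nat \<Rightarrow> nat) \<Rightarrow> nat \<Rightarrow> nat list" where
  "prefix_of w j = map w [0..<j]"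

definition coding_map :: "real \<Rightarrow> (nat list \<Rightarrow> real) \<Rightarrow> (nat \<Rightarrow> nat) \<Rightarrow> real" where
  "coding_map lam a w = (\<Sum>j. a (prefix_of w (Suc j)) * lam ^ Suc j)"

definition random_measure :: "nat \<Rightarrow> real \<Rightarrow> (nat list \<Rightarrow> real) \<Rightarrow> real measure" where
  "random_measure l lam a = distr (symbol_space l) lborel (coding_map lam a)"

definition singular_lebesgue :: "real measure \<Rightarrow> bool" where
  "singular_lebesgue m \<longleftrightarrow>
     (\<exists>A \<in> sets borel. emeasure lborel A = 0 \<and> emeasure m (UNIV - A) = 0)"

end

theory Submission
  imports Defs
begin


locale zo =
  fixes l :: nat and eta :: "real pmf" and lam :: real
  assumes l2: "l \<ge> 2" and fin: "finite (set_pmf eta)" and lam0: "0 < lam" and lam1: "lam < 1"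
begin

definition "T = tree_vertices l"
definition "L = label_space l eta"
definition "U = measure_pmf (pmf_of_set {1..l})"
definition "SS = stream_space U"
definition "B = Max (abs ` insert undefined (set_pmf eta))"
definition "clip x = max (- B) (min B x)"
definition "F a X = (\<Sum>j. clip (a (stake (Suc j) X)) * lam ^ Suc j)"
definition "mu a = distr SS lborel (F a)"
definition "good a \<longleftrightarrow> a \<in> space L \<and> (\<forall>w\<in>T. a w \<in> set_pmf eta)"
definition "sig i a = restrict (\<lambda>w. a (i # w)) T"

lemma l_pos: "l > 0" using l2 by simp

lemma U_prob: "prob_space U" unfolding U_def by (rule prob_space_measure_pmf)

lemma set_U: "set_pmf (pmf_of_set {1..l}) = {1..l}"
  using l_pos by (simp add: set_pmf_of_set)

lemma SS_prob: "prob_space SS"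
  unfolding SS_def by (rule prob_space.prob_space_stream_space[OF U_prob])

lemma sets_U: "sets U = sets (count_space UNIV)" unfolding U_def by simp

lemma sets_SS: "sets SS = sets (stream_space (count_space UNIV))"
  unfolding SS_def by (rule sets_stream_space_cong[OF sets_U])

lemma space_SS: "space SS = UNIV"
  unfolding SS_def space_stream_space U_def by simp

lemma L_prob: "prob_space L"
  unfolding L_def label_space_def by (intro prob_space_PiM prob_space_measure_pmf)

lemma space_L: "space L = PiE T (\<lambda>_. UNIV)"
  unfolding L_def label_space_def T_def by (simp add: space_PiM)

lemma B_ge: "\<bar>x\<bar> \<le> B" if "x \<in> insert undefined (set_pmf eta)"
  unfolding B_def using fin that by (intro Max_ge) auto

lemma B_nonneg: "0 \<le> B" using B_ge[of undefined] by simp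

lemma clip_bound: "\<bar>clip x\<bar> \<le> B" unfolding clip_def using B_nonneg by auto

lemma clip_id: "\<bar>x\<bar> \<le> B \<Longrightarrow> clip x = x" unfolding clip_def by auto

lemma good_clip: assumes "good a" shows "clip (a w) = a w"
proof (rule clip_id, rule B_ge)
  show "a w \<in> insert undefined (set_pmf eta)"
    using assms unfolding good_def space_L by (cases "w \<in> T") (auto simp: PiE_def extensional_def)
qed

lemma summable_F: "summable (\<lambda>j. clip (a (stake (Suc j) X)) * lam ^ Suc j)"
proof (rule summable_comparison_test')
  show "summable (\<lambda>j. B * lam ^ Suc j)"
    using lam0 lam1 by (intro summable_mult summable_Suc_iff[THEN iffD2] summable_geometric) auto
  show "norm (clip (a (stake (Suc j) X)) * lam ^ Suc j) \<le> B * lam ^ Suc j" for j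
    using clip_bound lam0 by (simp add: abs_mult mult_right_mono)
qed

lemma F_Cons: "F a (i ## X) = lam * clip (a [i]) + lam * F (\<lambda>w. a (i # w)) X"
proof -
  have "F a (i ## X) = (\<Sum>j. clip (a (stake (Suc (Suc j)) (i ## X))) * lam ^ Suc (Suc j)) + clip (a (stake 1 (i ## X))) * lam ^ 1"
    unfolding F_def by (subst suminf_split_head[OF summable_F]) simp
  also have "(\<Sum>j. clip (a (stake (Suc (Suc j)) (i ## X))) * lam ^ Suc (Suc j)) = lam * F (\<lambda>w. a (i # w)) X"
    unfolding F_def by (subst suminf_mult[OF summable_F, symmetric]) (simp add: algebra_simps)
  finally show ?thesis by simp
qed

lemma meas_comp: "(\<lambda>a. a w) \<in> borel_measurable L"
proof (cases "w \<in> T")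
  case True
  have "(\<lambda>a. a w) \<in> measurable L (measure_pmf eta)"
    unfolding L_def label_space_def using True T_def by (intro measurable_component_singleton) auto
  moreover have "(\<lambda>x. x) \<in> measurable (measure_pmf eta) (borel :: real measure)"
    by (simp add: measurable_def)
  ultimately show ?thesis by (rule measurable_compose)
next
  case False
  then have "\<And>a. a \<in> space L \<Longrightarrow> a w = undefined" by (auto simp: space_L PiE_def extensional_def)
  then show ?thesis by (subst measurable_cong[where g="\<lambda>_. undefined"]) auto
qed

lemma meas_clip[measurable]: "clip \<in> borel_measurable borel"
  unfolding clip_def by measurable

lemma meas_F: "(\<lambda>(a, X). F a X) \<in> borel_measurable (L \<Otimes>\<^sub>M SS)"
proof (rule borel_measurable_LIMSEQ_real)
  show "(\<lambda>n. (\<lambda>(a, X). \<Sum>j<n. clip (a (stake (Suc j) X)) * lam ^ Suc j) x) \<longlonglongrightarrow> (\<lambda>(a, X). F a X) x" for x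
    using summable_F[THEN summable_LIMSEQ] unfolding F_def by (cases x) simp
  have st: "(\<lambda>x. stake (Suc j) (snd x)) \<in> measurable (L \<Otimes>\<^sub>M SS) (count_space (UNIV :: nat list set))" for j
  proof -
    have "stake (Suc j) \<in> measurable SS (count_space (UNIV :: nat list set))"
      using measurable_stake by (subst measurable_cong_sets[OF sets_SS refl])
    then show ?thesis by (rule measurable_compose[OF measurable_snd])
  qed
  have t: "(\<lambda>x. clip (fst x (stake (Suc j) (snd x)))) \<in> borel_measurable (L \<Otimes>\<^sub>M SS)" for j
  proof (rule measurable_compose_countable'[where f="\<lambda>w x. clip (fst x w)" and I=UNIV, OF _ st])
    fix w :: "nat list"
    show "(\<lambda>x. clip (fst x w)) \<in> borel_measurable (L \<Otimes>\<^sub>M SS)"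
      using measurable_compose[OF measurable_compose[OF measurable_fst[of L SS] meas_comp] meas_clip] by (simp add: comp_def)
  qed simp
  show "(\<lambda>(a, X). \<Sum>j<n. clip (a (stake (Suc j) X)) * lam ^ Suc j) \<in> borel_measurable (L \<Otimes>\<^sub>M SS)" for n
    using t by (simp add: split_beta)
qed

lemma meas_Fa: "F a \<in> borel_measurable SS" if "a \<in> space L"
  using measurable_Pair2[OF meas_F that] by simp

lemma stake_to_stream: "stake n (to_stream w) = prefix_of w n"
  unfolding to_stream_def prefix_of_def by (intro nth_equalityI) auto

lemma mu_eq: assumes "good a" shows "random_measure l lam a = mu a"
proof -
  have aL: "a \<in> space L" using assms good_def by auto
  have "symbol_space l = PiM UNIV (\<lambda>_. U)" unfolding symbol_space_def U_def ..
  then have SSd: "SS = distr (symbol_space l) SS to_stream"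
    unfolding SS_def by (simp add: stream_space_eq_distr[symmetric])
  have "mu a = distr (symbol_space l) lborel (F a \<circ> to_stream)"
    unfolding mu_def
  proof (subst SSd, rule distr_distr)
    show "to_stream \<in> measurable (symbol_space l) SS"
      unfolding SS_def \<open>symbol_space l = _\<close> by (rule measurable_to_stream)
    show "F a \<in> measurable SS lborel" using meas_Fa[OF aL] by simp
  qed
  also have "\<dots> = random_measure l lam a"
    unfolding random_measure_def
  proof (rule distr_cong)
    fix w show "(F a \<circ> to_stream) w = coding_map lam a w"
      unfolding F_def coding_map_def comp_def stake_to_stream good_clip[OF assms] ..
  qed auto
  finally show ?thesis ..
qed

lemma mu_prob: "a \<in> space L \<Longrightarrow> prob_space (mu a)"
  unfolding mu_def using meas_Fa[of a] by (intro prob_space.prob_space_distr SS_prob) auto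

lemma sets_mu[simp]: "sets (mu a) = sets borel" unfolding mu_def by simp

lemma emeasure_mu: "a \<in> space L \<Longrightarrow> A \<in> sets borel \<Longrightarrow> emeasure (mu a) A = emeasure SS {X. F a X \<in> A}"
  unfolding mu_def using meas_Fa[of a] by (subst emeasure_distr) (auto simp: space_SS vimage_def)

lemma measure_mu: "a \<in> space L \<Longrightarrow> A \<in> sets borel \<Longrightarrow> measure (mu a) A = measure SS {X. F a X \<in> A}"
  unfolding mu_def using meas_Fa[of a] by (subst measure_distr) (auto simp: space_SS vimage_def)

lemma sets_SS_Collect: "{X. F a X \<in> A} \<in> sets SS" if "a \<in> space L" "A \<in> sets borel"
  using measurable_sets[OF meas_Fa[OF that(1)] that(2)] by (simp add: space_SS vimage_def)

lemma one_level:
  assumes P: "{X. P X} \<in> sets SS"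
  shows "measure SS {X. P X} = (\<Sum>i\<in>{1..l}. measure SS {X. P (i ## X)}) / l"
proof -
  interpret U: prob_space U by (rule U_prob)
  interpret S: prob_space SS by (rule SS_prob)
  have Pm: "{X. P X} \<in> sets (stream_space U)" using P SS_def by simp
  have "emeasure SS {X. P X} = (\<integral>\<^sup>+t. emeasure SS {x \<in> space SS. t ## x \<in> {X. P X}} \<partial>U)"
    unfolding SS_def by (rule U.emeasure_stream_space[OF Pm])
  also have "\<dots> = (\<integral>\<^sup>+t. emeasure SS {x. P (t ## x)} \<partial>U)"
    by (simp add: space_SS)
  also have "\<dots> = (\<Sum>i\<in>{1..l}. emeasure SS {X. P (i ## X)}) / of_nat (card {1..l})"
    unfolding U_def using l_pos by (subst nn_integral_pmf_of_set) simp_all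
  also have "\<dots> = (\<Sum>i\<in>{1..l}. ennreal (measure SS {X. P (i ## X)})) / ennreal (real l)"
    by (simp add: S.emeasure_eq_measure ennreal_of_nat_eq_real_of_nat sum_ennreal)
  also have "\<dots> = ennreal ((\<Sum>i\<in>{1..l}. measure SS {X. P (i ## X)}) / l)"
    by (subst sum_ennreal) (auto intro!: divide_ennreal sum_nonneg simp: l_pos)
  finally show ?thesis
    by (subst (asm) S.emeasure_eq_measure, subst (asm) ennreal_inj) (auto intro!: divide_nonneg_nonneg sum_nonneg)
qed

end



lemma null_affine:
  fixes t c :: real
  assumes "c \<noteq> 0" "N \<in> null_sets lborel"
  shows "{x. t + c * x \<in> N} \<in> null_sets lborel"
proof -
  have Nb: "N \<in> sets borel" using assms(2) by (auto dest: null_setsD2)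
  have "AE x in lborel. x \<notin> N" using assms(2) by (rule AE_not_in)
  then have "AE x in lborel. t + c * x \<notin> N"
    using Nb by (intro AE_borel_affine[OF assms(1)]) auto
  moreover have "{x. t + c * x \<in> N} \<in> sets borel"
    using measurable_sets[of "\<lambda>x. t + c * x" borel borel N] Nb by (auto simp: vimage_def)
  ultimately show ?thesis
    using AE_iff_null_sets[of "{x. t + c * x \<in> N}" lborel] by simp
qed

context zo begin

definition "s a = (SUP N\<in>null_sets lborel. emeasure (mu a) N)"
definition "sr a = enn2real (s a)"
definition "S i a x = lam * clip (a [i]) + lam * x"

lemma null_borel: "N \<in> null_sets lborel \<Longrightarrow> N \<in> sets borel"
  by (auto dest: null_setsD2)

lemma s_attained: assumes "a \<in> space L" shows "\<exists>N\<in>null_sets lborel. emeasure (mu a) N = s a"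
proof -
  let ?A = "(\<lambda>N. emeasure (mu a) N) ` null_sets lborel"
  have "?A \<noteq> {}" by auto
  from ennreal_Sup_countable_SUP[OF this] obtain f :: "nat \<Rightarrow> ennreal" where f: "range f \<subseteq> ?A" "Sup ?A = Sup (range f)"
    by auto
  have "\<forall>k. \<exists>N. N \<in> null_sets lborel \<and> f k = emeasure (mu a) N" using f(1) by blast
  then obtain Nk where Nk: "\<And>k. Nk k \<in> null_sets lborel" "\<And>k. f k = emeasure (mu a) (Nk k)" by metis
  let ?N = "\<Union>k. Nk k"
  have Nn: "?N \<in> null_sets lborel" using null_sets_UN[of Nk lborel] Nk(1) by blast
  have "s a = Sup (range f)" unfolding s_def using f(2) by simp
  also have "\<dots> \<le> emeasure (mu a) ?N"
    using Nk Nn by (auto intro!: SUP_least emeasure_mono null_borel)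
  finally have "s a \<le> emeasure (mu a) ?N" .
  moreover have "emeasure (mu a) ?N \<le> s a" unfolding s_def using Nn by (rule SUP_upper)
  ultimately show ?thesis using Nn by (intro bexI[of _ ?N]) auto
qed

lemma emeasure_le_s: "N \<in> null_sets lborel \<Longrightarrow> emeasure (mu a) N \<le> s a"
  unfolding s_def by (rule SUP_upper)

lemma s_le1: assumes "a \<in> space L" shows "s a \<le> 1"
proof -
  interpret prob_space "mu a" using mu_prob[OF assms] .
  show ?thesis unfolding s_def by (intro SUP_least) (simp add: emeasure_le_1)
qed

lemma s_eq: assumes "a \<in> space L" shows "s a = ennreal (sr a)"
  using s_le1[OF assms] unfolding sr_def by (simp add: ennreal_enn2real_if top_unique) (metis ennreal_one_less_top not_le top.not_eq_extremum)

lemma sr_nonneg: "0 \<le> sr a" unfolding sr_def by simp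

lemma sr_le1: "a \<in> space L \<Longrightarrow> sr a \<le> 1"
  using s_eq s_le1 by (metis ennreal_le_1)

lemma measure_le_sr: assumes "a \<in> space L" "N \<in> null_sets lborel" shows "measure (mu a) N \<le> sr a"
proof -
  interpret prob_space "mu a" using mu_prob[OF assms(1)] .
  show ?thesis using emeasure_le_s[OF assms(2), of a] s_eq[OF assms(1)]
    by (simp add: emeasure_eq_measure sr_nonneg)
qed

lemma sr_attained: assumes "a \<in> space L" shows "\<exists>N\<in>null_sets lborel. measure (mu a) N = sr a"
proof -
  interpret prob_space "mu a" using mu_prob[OF assms(1)] .
  from s_attained[OF assms] obtain N where "N \<in> null_sets lborel" "emeasure (mu a) N = s a" by blast
  then show ?thesis using s_eq[OF assms] by (intro bexI[of _ N]) (auto simp: emeasure_eq_measure sr_nonneg)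
qed

lemma sig_apply: assumes "a \<in> space L" "i \<in> {1..l}" "w \<noteq> []" shows "sig i a w = a (i # w)"
proof (cases "w \<in> T")
  case True then show ?thesis unfolding sig_def by simp
next
  case False
  then have "i # w \<notin> T" using assms(2,3) unfolding T_def tree_vertices_def by auto
  then show ?thesis using False assms(1) unfolding sig_def by (auto simp: space_L PiE_def extensional_def)
qed

lemma sig_space: "sig i a \<in> space L" unfolding sig_def space_L by auto

lemma sig_good: assumes "good a" "i \<in> {1..l}" shows "good (sig i a)"
proof -
  have "\<forall>w\<in>T. sig i a w \<in> set_pmf eta"
    using assms unfolding good_def sig_def T_def tree_vertices_def by auto
  then show ?thesis using sig_space unfolding good_def by auto
qed

lemma F_sig: assumes "a \<in> space L" "i \<in> {1..l}" shows "F a (i ## X) = S i a (F (sig i a) X)"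
proof -
  have "F (\<lambda>w. a (i # w)) X = F (sig i a) X"
    unfolding F_def by (simp add: sig_apply[OF assms] del: stake.simps)
  moreover have "F a (i ## X) = lam * clip (a [i]) + lam * F (\<lambda>w. a (i # w)) X" by (rule F_Cons)
  ultimately show ?thesis unfolding S_def by simp
qed

lemma S_borel: "{x. S i a x \<in> A} \<in> sets borel" if "A \<in> sets borel"
  using measurable_sets[of "S i a" borel borel A] that unfolding S_def by (auto simp: vimage_def)

lemma mu_rec: assumes "a \<in> space L" "A \<in> sets borel"
  shows "measure (mu a) A = (\<Sum>i\<in>{1..l}. measure (mu (sig i a)) {x. S i a x \<in> A}) / l"
proof -
  have "measure (mu a) A = measure SS {X. F a X \<in> A}" by (rule measure_mu[OF assms])
  also have "\<dots> = (\<Sum>i\<in>{1..l}. measure SS {X. F a (i ## X) \<in> A}) / l"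
    by (rule one_level[OF sets_SS_Collect[OF assms]])
  also have "\<dots> = (\<Sum>i\<in>{1..l}. measure (mu (sig i a)) {x. S i a x \<in> A}) / l"
    by (intro arg_cong2[where f="(/)"] sum.cong refl)
       (simp add: F_sig[OF assms(1)] measure_mu[OF sig_space S_borel[OF assms(2)]])
  finally show ?thesis .
qed

lemma S_null: "N \<in> null_sets lborel \<Longrightarrow> {x. S i a x \<in> N} \<in> null_sets lborel"
  unfolding S_def using lam0 by (intro null_affine) auto

lemma sr_rec: assumes "a \<in> space L" shows "sr a = (\<Sum>i\<in>{1..l}. sr (sig i a)) / l"
proof (rule antisym)
  obtain N where N: "N \<in> null_sets lborel" "measure (mu a) N = sr a" using sr_attained[OF assms] by blast
  have "sr a = (\<Sum>i\<in>{1..l}. measure (mu (sig i a)) {x. S i a x \<in> N}) / l"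
    using mu_rec[OF assms null_borel[OF N(1)]] N(2) by simp
  also have "\<dots> \<le> (\<Sum>i\<in>{1..l}. sr (sig i a)) / l"
    by (intro divide_right_mono sum_mono measure_le_sr sig_space S_null N(1)) simp
  finally show "sr a \<le> (\<Sum>i\<in>{1..l}. sr (sig i a)) / l" .
next
  have "\<forall>i. \<exists>N. N \<in> null_sets lborel \<and> measure (mu (sig i a)) N = sr (sig i a)"
    using sr_attained[OF sig_space] by blast
  then obtain Ni where Ni: "\<And>i. Ni i \<in> null_sets lborel" "\<And>i. measure (mu (sig i a)) (Ni i) = sr (sig i a)"
    by metis
  define M where "M i = {x. - clip (a [i]) + (1 / lam) * x \<in> Ni i}" for i
  have Mn: "M i \<in> null_sets lborel" for i unfolding M_def using lam0 Ni(1) by (intro null_affine) auto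
  let ?M = "\<Union>i\<in>{1..l}. M i"
  have MM: "?M \<in> null_sets lborel" using Mn by (intro null_sets.finite_UN) auto
  have sub: "Ni i \<subseteq> {x. S i a x \<in> ?M}" if "i \<in> {1..l}" for i
  proof
    fix y assume "y \<in> Ni i"
    then have "S i a y \<in> M i" using lam0 unfolding M_def S_def by (simp add: field_simps)
    then show "y \<in> {x. S i a x \<in> ?M}" using that by auto
  qed
  have "(\<Sum>i\<in>{1..l}. sr (sig i a)) / l \<le> (\<Sum>i\<in>{1..l}. measure (mu (sig i a)) {x. S i a x \<in> ?M}) / l"
  proof (intro divide_right_mono sum_mono)
    fix i assume i: "i \<in> {1..l}"
    interpret prob_space "mu (sig i a)" using mu_prob[OF sig_space] .
    show "sr (sig i a) \<le> measure (mu (sig i a)) {x. S i a x \<in> ?M}"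
      unfolding Ni(2)[symmetric]
      using S_borel[OF null_borel[OF MM], of i a] by (intro finite_measure_mono sub i) simp
  qed simp
  also have "\<dots> = measure (mu a) ?M" using mu_rec[OF assms null_borel[OF MM]] by simp
  also have "\<dots> \<le> sr a" by (rule measure_le_sr[OF assms MM])
  finally show "(\<Sum>i\<in>{1..l}. sr (sig i a)) / l \<le> sr a" .
qed

end



definition Ivl :: "rat \<times> rat \<Rightarrow> real set" where "Ivl r = {of_rat (fst r) <..< of_rat (snd r)}"
definition Ur :: "(rat \<times> rat) list \<Rightarrow> real set" where "Ur xs = (\<Union>r\<in>set xs. Ivl r)"
definition Vs :: "real set \<Rightarrow> nat \<Rightarrow> (rat \<times> rat) list" where
  "Vs G n = filter (\<lambda>r. Ivl r \<subseteq> G) (map from_nat [0..<n])"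

lemma Ur_borel[measurable]: "Ur xs \<in> sets borel"
  unfolding Ur_def Ivl_def by (intro sets.finite_UN) auto

lemma Vs_sub: "Ur (Vs G n) \<subseteq> G" unfolding Ur_def Vs_def by auto

lemma Vs_inc: "incseq (\<lambda>n. Ur (Vs G n))"
  unfolding incseq_def Ur_def Vs_def by auto (meson atLeastLessThan_iff le_trans less_le_not_le zero_le)

lemma Vs_UN: assumes "open G" shows "(\<Union>n. Ur (Vs G n)) = G"
proof
  show "(\<Union>n. Ur (Vs G n)) \<subseteq> G" using Vs_sub by auto
  show "G \<subseteq> (\<Union>n. Ur (Vs G n))"
  proof
    fix x assume "x \<in> G"
    then obtain d where d: "d > 0" "ball x d \<subseteq> G" using assms open_contains_ball by blast
    obtain p :: rat where p: "x - d < of_rat p" "of_rat p < x" using of_rat_dense[of "x - d" x] d by auto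
    obtain q :: rat where q: "x < of_rat q" "of_rat q < x + d" using of_rat_dense[of x "x + d"] d by auto
    have sub: "Ivl (p, q) \<subseteq> G"
    proof
      fix y assume "y \<in> Ivl (p, q)"
      then have "dist x y < d" using p q by (auto simp: Ivl_def dist_real_def)
      then show "y \<in> G" using d by auto
    qed
    let ?m = "to_nat (p, q)"
    have "(p, q) \<in> set (Vs G (Suc ?m))" unfolding Vs_def using sub by (auto simp: image_iff intro!: bexI[of _ ?m])
    moreover have "x \<in> Ivl (p, q)" using p q by (auto simp: Ivl_def)
    ultimately show "x \<in> (\<Union>n. Ur (Vs G n))" unfolding Ur_def by blast
  qed
qed

lemma open_small:
  assumes "N \<in> null_sets lborel" "e > 0"
  shows "\<exists>G. open G \<and> N \<subseteq> G \<and> emeasure lborel G < ennreal e"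
proof -
  have Nb: "N \<in> sets lborel" using assms(1) by auto
  then have "N \<in> sets lebesgue" by simp
  from sets_lebesgue_outer_open[OF this assms(2)] obtain G where
    G: "open G" "N \<subseteq> G" "emeasure lebesgue (G - N) < ennreal e" by blast
  have GN: "G - N \<in> sets lborel" using G(1) Nb by auto
  have "emeasure lborel G \<le> emeasure lborel ((G - N) \<union> N)" using G(1) Nb by (intro emeasure_mono) auto
  also have "\<dots> \<le> emeasure lborel (G - N) + emeasure lborel N"
    by (intro emeasure_subadditive GN Nb)
  also have "\<dots> = emeasure lebesgue (G - N)" using null_setsD1[OF assms(1)] GN by simp
  finally show ?thesis using G by (intro exI[of _ G]) auto
qed




context zo begin

definition "It k = {xs. emeasure lborel (Ur xs) < ennreal (1 / Suc k)}"
definition "t a = (INF k. SUP xs\<in>It k. emeasure (mu a) (Ur xs))"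

lemma s_le_t: assumes "a \<in> space L" shows "s a \<le> t a"
  unfolding s_def
proof (rule SUP_least)
  fix N :: "real set" assume N: "N \<in> null_sets lborel"
  show "emeasure (mu a) N \<le> t a"
    unfolding t_def
  proof (rule INF_greatest)
    fix k :: nat
    obtain G where G: "open G" "N \<subseteq> G" "emeasure lborel G < ennreal (1 / Suc k)"
      using open_small[OF N, of "1 / Suc k"] by auto
    have "emeasure (mu a) N \<le> emeasure (mu a) G"
      using G N by (intro emeasure_mono) auto
    also have "\<dots> = (SUP n. emeasure (mu a) (Ur (Vs G n)))"
      using SUP_emeasure_incseq[of "\<lambda>n. Ur (Vs G n)" "mu a"] Vs_inc Vs_UN[OF G(1)] by (auto simp: image_subset_iff)
    also have "\<dots> \<le> (SUP xs\<in>It k. emeasure (mu a) (Ur xs))"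
    proof (rule SUP_least)
      fix n
      have "emeasure lborel (Ur (Vs G n)) \<le> emeasure lborel G"
        using G(1) Vs_sub by (intro emeasure_mono) auto
      then have "Vs G n \<in> It k" using G(3) unfolding It_def by auto
      then show "emeasure (mu a) (Ur (Vs G n)) \<le> (SUP xs\<in>It k. emeasure (mu a) (Ur xs))"
        by (rule SUP_upper)
    qed
    finally show "emeasure (mu a) N \<le> (SUP xs\<in>It k. emeasure (mu a) (Ur xs))" .
  qed
qed

lemma t_le_s: assumes "a \<in> space L" shows "t a \<le> s a"
proof (rule dense_le)
  fix r assume r: "r < t a"
  have "\<forall>k. \<exists>xs. xs \<in> It (2 ^ k) \<and> r < emeasure (mu a) (Ur xs)"
  proof
    fix k :: nat
    have "r < (SUP xs\<in>It (2 ^ k). emeasure (mu a) (Ur xs))"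
      using r unfolding t_def by (meson INF_lower UNIV_I order_less_le_trans)
    then show "\<exists>xs. xs \<in> It (2 ^ k) \<and> r < emeasure (mu a) (Ur xs)"
      by (auto simp: less_SUP_iff)
  qed
  then obtain X where X: "\<And>k. X k \<in> It (2 ^ k)" "\<And>k. r < emeasure (mu a) (Ur (X k))" by metis
  define A where "A k = Ur (X k)" for k
  have Ab[measurable]: "A k \<in> sets lborel" for k unfolding A_def by simp
  have Alt: "emeasure lborel (A k) < ennreal ((1/2) ^ k)" for k
  proof -
    have "emeasure lborel (A k) < ennreal (1 / Suc (2 ^ k))" using X(1)[of k] unfolding It_def A_def by simp
    also have "\<dots> \<le> ennreal ((1/2) ^ k)"
    proof (intro ennreal_leI)
      have "(1::real) / Suc (2 ^ k) \<le> 1 / 2 ^ k" by (intro divide_left_mono) (auto simp: add_pos_pos)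
      then show "1 / real (Suc (2 ^ k)) \<le> (1 / 2) ^ k" by (simp add: power_divide)
    qed
    finally show ?thesis .
  qed
  have fin: "emeasure lborel (A k) < \<infinity>" for k using Alt[of k] by (simp add: order_less_le_trans top_unique)
  have mle: "measure lborel (A k) \<le> (1/2) ^ k" for k
    using Alt[of k] fin[of k] by (simp add: measure_def enn2real_leI less_imp_le)
  have "summable (\<lambda>k. measure lborel (A k))"
    by (rule summable_comparison_test'[OF summable_geometric[of "1/2"]]) (use mle in auto)
  then have null: "limsup A \<in> null_sets lborel"
    by (intro borel_cantelli_limsup1 Ab) (use fin in auto)
  interpret P: prob_space "mu a" using mu_prob[OF assms] .
  have "limsup A = (\<Inter>n. \<Union>m\<in>{n..}. A m)" by (simp add: limsup_INF_SUP)
  then have eqL: "emeasure (mu a) (limsup A) = (INF n. emeasure (mu a) (\<Union>m\<in>{n..}. A m))"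
  proof (simp, subst INF_emeasure_decseq)
    show "range (\<lambda>n. \<Union>m\<in>{n..}. A m) \<subseteq> sets (mu a)"
      using Ab by (auto intro!: sets.countable_UN')
    show "decseq (\<lambda>n. \<Union>m\<in>{n..}. A m)"
      unfolding decseq_def by (auto intro: order_trans)
  qed auto
  have Ub: "(\<Union>m\<in>{n..}. A m) \<in> sets borel" for n
    using Ab by (auto intro!: sets.countable_UN')
  moreover have "r \<le> (INF n. emeasure (mu a) (\<Union>m\<in>{n..}. A m))"
  proof (rule INF_greatest)
    fix n
    have "r \<le> emeasure (mu a) (A n)" using X(2)[of n] unfolding A_def by simp
    also have "\<dots> \<le> emeasure (mu a) (\<Union>m\<in>{n..}. A m)" using Ub[of n] by (intro emeasure_mono) auto
    finally show "r \<le> emeasure (mu a) (\<Union>m\<in>{n..}. A m)" .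
  qed
  ultimately have "r \<le> emeasure (mu a) (limsup A)" using eqL by simp
  then show "r \<le> s a" using emeasure_le_s[OF null, of a] by (rule order_trans)
qed

lemma s_eq_t: "a \<in> space L \<Longrightarrow> s a = t a"
  using s_le_t t_le_s by (meson antisym)

lemma meas_emu: assumes "A \<in> sets borel" shows "(\<lambda>a. emeasure (mu a) A) \<in> borel_measurable L"
proof -
  interpret S: prob_space SS by (rule SS_prob)
  let ?Q = "{p \<in> space (L \<Otimes>\<^sub>M SS). (\<lambda>(a, X). F a X) p \<in> A}"
  have Q: "?Q \<in> sets (L \<Otimes>\<^sub>M SS)" using measurable_sets[OF meas_F assms] by (simp add: vimage_def Int_def conj_commute)
  have "(\<lambda>a. emeasure SS (Pair a -` ?Q)) \<in> borel_measurable L" by (rule S.measurable_emeasure_Pair[OF Q])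
  moreover have "emeasure SS (Pair a -` ?Q) = emeasure (mu a) A" if "a \<in> space L" for a
    using that assms by (subst emeasure_mu) (auto simp: space_pair_measure space_SS vimage_def)
  ultimately show ?thesis by (subst measurable_cong[symmetric]) auto
qed

lemma countable_It: "countable (It k)" by (rule countable_subset[OF subset_UNIV]) simp

lemma meas_t: "t \<in> borel_measurable L"
  unfolding t_def
  by (intro borel_measurable_INF borel_measurable_SUP countable_It meas_emu Ur_borel) auto

lemma meas_sr: "sr \<in> borel_measurable L"
proof -
  have "(\<lambda>a. enn2real (t a)) \<in> borel_measurable L" using meas_t by measurable
  moreover have "enn2real (t a) = sr a" if "a \<in> space L" for a using s_eq_t[OF that] unfolding sr_def by simp
  ultimately show ?thesis by (subst measurable_cong[symmetric]) auto
qed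

end



context zo begin

definition "M0 = measure_pmf eta"

lemma L_eq: "L = PiM T (\<lambda>_. M0)" unfolding L_def label_space_def T_def M0_def ..

lemma T_ne: "T \<noteq> {}"
proof -
  have "[1] \<in> T" unfolding T_def tree_vertices_def using l_pos by auto
  then show ?thesis by auto
qed

lemma cons_T: "i \<in> {1..l} \<Longrightarrow> w \<in> T \<Longrightarrow> i # w \<in> T"
  unfolding T_def tree_vertices_def by auto

lemma meas_sig: assumes "i \<in> {1..l}" shows "sig i \<in> measurable L L"
  unfolding sig_def L_eq
  by (intro measurable_restrict measurable_component_singleton cons_T assms)

lemma distr_sig: assumes "i \<in> {1..l}" shows "distr L L (sig i) = L"
proof -
  have "distr (PiM T (\<lambda>_. M0)) (PiM T (\<lambda>w. (\<lambda>_. M0) ((\<lambda>w. i # w) w))) (\<lambda>\<omega>. \<lambda>n\<in>T. \<omega> ((\<lambda>w. i # w) n))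
        = PiM T (\<lambda>w. (\<lambda>_. M0) ((\<lambda>w. i # w) w))"
    by (rule distr_PiM_reindex) (auto simp: M0_def prob_space_measure_pmf inj_on_def intro: cons_T assms)
  then show ?thesis unfolding L_eq sig_def by simp
qed

lemma AE_good: "AE a in L. good a"
proof -
  have cT: "countable T" by (rule countable_subset[OF subset_UNIV]) simp
  have "AE a in L. \<forall>w\<in>T. a w \<in> set_pmf eta"
  proof (subst AE_ball_countable[OF cT], intro ballI)
    fix w assume "w \<in> T"
    have "AE x in M0. x \<in> set_pmf eta" unfolding M0_def by (simp add: AE_measure_pmf_iff)
    then show "AE a in L. a w \<in> set_pmf eta"
      unfolding L_eq by (intro AE_PiM_component[OF _ \<open>w \<in> T\<close>]) (auto simp: M0_def prob_space_measure_pmf)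
  qed
  then show ?thesis unfolding good_def by (auto elim: eventually_mono)
qed

lemma sr_sig_meas: "i \<in> {1..l} \<Longrightarrow> (\<lambda>a. sr (sig i a)) \<in> borel_measurable L"
  using measurable_compose[OF meas_sig meas_sr] by (simp add: comp_def)

lemma indep_sig: "prob_space.indep_vars L (\<lambda>_. borel) (\<lambda>i a. sr (sig i a)) {1..l}"
proof -
  interpret P: prob_space L by (rule L_prob)
  have rv: "(\<lambda>a. a w) \<in> measurable L M0" for w :: "nat list"
  proof (cases "w \<in> T")
    case True
    have "(\<lambda>a. a w) \<in> measurable (PiM T (\<lambda>_. M0)) M0" by (rule measurable_component_singleton[OF True])
    then show ?thesis unfolding L_eq .
  next
    case False
    then have "\<And>a. a \<in> space L \<Longrightarrow> a w = undefined" by (auto simp: space_L PiE_def extensional_def)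
    then show ?thesis by (subst measurable_cong[where g="\<lambda>_. undefined"]) (auto simp: M0_def)
  qed
  have ind0: "P.indep_vars (\<lambda>_. M0) (\<lambda>w a. a w) T"
  proof (subst P.indep_vars_iff_distr_eq_PiM[OF T_ne rv])
    have "distr L (PiM T (\<lambda>_. M0)) (\<lambda>x. \<lambda>i\<in>T. x i) = distr L L (\<lambda>x. x)"
      unfolding L_eq by (intro distr_cong) (auto simp: space_PiM PiE_def extensional_def restrict_def)
    also have "\<dots> = L" by simp
    also have "L = PiM T (\<lambda>i. distr L M0 (\<lambda>x. x i))"
      unfolding L_eq by (intro PiM_cong refl distr_PiM_component[symmetric]) (auto simp: M0_def prob_space_measure_pmf)
    finally show "distr L (PiM T (\<lambda>_. M0)) (\<lambda>x. \<lambda>i\<in>T. x i) = PiM T (\<lambda>i. distr L M0 (\<lambda>x. x i))" .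
  qed
  define K where "K i = (\<lambda>w. i # w) ` T" for i :: nat
  have KT: "K i \<subseteq> T" if "i \<in> {1..l}" for i unfolding K_def using cons_T that by auto
  have disj: "disjoint_family_on K {1..l}" unfolding K_def disjoint_family_on_def by auto
  have ind1: "P.indep_vars (\<lambda>i. PiM (K i) (\<lambda>_. M0)) (\<lambda>i a. restrict (\<lambda>w. a w) (K i)) {1..l}"
    by (rule P.indep_vars_restrict[OF ind0 KT disj])
  define Y where "Y i b = sr (restrict (\<lambda>w. b (i # w)) T)" for i :: nat and b :: "nat list \<Rightarrow> real"
  have Ym: "Y i \<in> borel_measurable (PiM (K i) (\<lambda>_. M0))" for i
  proof -
    have "(\<lambda>b. restrict (\<lambda>w. b (i # w)) T) \<in> measurable (PiM (K i) (\<lambda>_. M0)) L"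
      unfolding L_eq by (intro measurable_restrict measurable_component_singleton) (auto simp: K_def)
    then show ?thesis unfolding Y_def using measurable_compose meas_sr by blast
  qed
  have ind2: "P.indep_vars (\<lambda>_. borel) (\<lambda>i a. Y i (restrict (\<lambda>w. a w) (K i))) {1..l}"
    by (rule P.indep_vars_compose2[OF ind1 Ym])
  have eq: "Y i (restrict (\<lambda>w. a w) (K i)) = sr (sig i a)" for i a
    unfolding Y_def sig_def K_def by (intro arg_cong[where f=sr]) (auto simp: restrict_def)
  show ?thesis using ind2 by (subst (asm) P.indep_vars_cong[OF refl, where Y="\<lambda>i a. sr (sig i a)"]) (auto simp: eq)
qed

end



context zo begin

definition "m = integral\<^sup>L L sr"

lemma sr_const: "AE a in L. sr a = m"
proof -
  interpret P: prob_space L by (rule L_prob)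
  define Z where "Z i a = sr (sig i a)" for i a
  define q where "q = integral\<^sup>L L (\<lambda>a. sr a * sr a)"
  have srb: "a \<in> space L \<Longrightarrow> \<bar>sr a\<bar> \<le> 1" for a using sr_le1 sr_nonneg by auto
  have Zb: "\<bar>Z i a\<bar> \<le> 1" for i a unfolding Z_def using srb[OF sig_space] .
  have int_sr: "integrable L sr" by (rule P.integrable_const_bound[where B=1]) (auto intro!: AE_I2 srb meas_sr)
  have Zm: "i \<in> {1..l} \<Longrightarrow> Z i \<in> borel_measurable L" for i unfolding Z_def by (rule sr_sig_meas)
  have int_ZZ: "integrable L (\<lambda>a. Z i a * Z j a)" if "i \<in> {1..l}" "j \<in> {1..l}" for i j
    by (rule P.integrable_const_bound[where B=1])
       (use Zb Zm that in \<open>auto simp: abs_mult intro!: AE_I2 mult_le_one borel_measurable_times\<close>)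
  have EZ: "integral\<^sup>L L (Z i) = m" if "i \<in> {1..l}" for i
  proof -
    have "m = integral\<^sup>L (distr L L (sig i)) sr" unfolding m_def distr_sig[OF that] ..
    also have "\<dots> = integral\<^sup>L L (Z i)" unfolding Z_def by (rule integral_distr[OF meas_sig[OF that] meas_sr])
    finally show ?thesis ..
  qed
  have EZ2: "integral\<^sup>L L (\<lambda>a. Z i a * Z i a) = q" if "i \<in> {1..l}" for i
  proof -
    have "q = integral\<^sup>L (distr L L (sig i)) (\<lambda>a. sr a * sr a)" unfolding q_def distr_sig[OF that] ..
    also have "\<dots> = integral\<^sup>L L (\<lambda>a. Z i a * Z i a)" unfolding Z_def
      by (rule integral_distr[OF meas_sig[OF that]]) (use meas_sr in measurable)
    finally show ?thesis ..
  qed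
  have EZZ: "integral\<^sup>L L (\<lambda>a. Z i a * Z j a) = m * m" if "i \<in> {1..l}" "j \<in> {1..l}" "i \<noteq> j" for i j
  proof -
    have ind: "P.indep_vars (\<lambda>_. borel) Z {i, j}"
      using P.indep_vars_subset[OF indep_sig, of "{i, j}"] that unfolding Z_def by auto
    have "integral\<^sup>L L (\<lambda>a. \<Prod>k\<in>{i, j}. Z k a) = (\<Prod>k\<in>{i, j}. integral\<^sup>L L (Z k))"
      by (rule P.indep_vars_lebesgue_integral[OF _ ind])
         (use that int_ZZ in \<open>auto intro!: P.integrable_const_bound[where B=1] AE_I2 Zb Zm\<close>)
    then show ?thesis using that EZ by simp
  qed
  have rec: "sr a = (\<Sum>i\<in>{1..l}. Z i a) / l" if "a \<in> space L" for a
    unfolding Z_def by (rule sr_rec[OF that])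
  have "q = integral\<^sup>L L (\<lambda>a. (\<Sum>i\<in>{1..l}. \<Sum>j\<in>{1..l}. Z i a * Z j a) / (real l * real l))"
    unfolding q_def
    by (intro Bochner_Integration.integral_cong refl) (simp add: rec sum_product power2_eq_square)
  also have "\<dots> = (\<Sum>i\<in>{1..l}. \<Sum>j\<in>{1..l}. integral\<^sup>L L (\<lambda>a. Z i a * Z j a)) / (real l * real l)"
  proof -
    have "integral\<^sup>L L (\<lambda>a. \<Sum>i\<in>{1..l}. \<Sum>j\<in>{1..l}. Z i a * Z j a) =
        (\<Sum>i\<in>{1..l}. integral\<^sup>L L (\<lambda>a. \<Sum>j\<in>{1..l}. Z i a * Z j a))"
      by (rule Bochner_Integration.integral_sum) (auto intro!: Bochner_Integration.integrable_sum int_ZZ)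
    also have "\<dots> = (\<Sum>i\<in>{1..l}. \<Sum>j\<in>{1..l}. integral\<^sup>L L (\<lambda>a. Z i a * Z j a))"
      by (intro sum.cong refl Bochner_Integration.integral_sum) (auto intro!: int_ZZ)
    finally show ?thesis by simp
  qed
  also have "(\<Sum>i\<in>{1..l}. \<Sum>j\<in>{1..l}. integral\<^sup>L L (\<lambda>a. Z i a * Z j a)) = (\<Sum>i\<in>{1..l}. q + (real l - 1) * (m * m))"
  proof (rule sum.cong[OF refl])
    fix i assume i: "i \<in> {1..l}"
    have "(\<Sum>j\<in>{1..l}. integral\<^sup>L L (\<lambda>a. Z i a * Z j a)) =
          integral\<^sup>L L (\<lambda>a. Z i a * Z i a) + (\<Sum>j\<in>{1..l} - {i}. integral\<^sup>L L (\<lambda>a. Z i a * Z j a))"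
      using i by (subst sum.remove[of _ i]) auto
    also have "(\<Sum>j\<in>{1..l} - {i}. integral\<^sup>L L (\<lambda>a. Z i a * Z j a)) = (\<Sum>j\<in>{1..l} - {i}. m * m)"
      using i by (intro sum.cong refl EZZ) auto
    also have "\<dots> = (real l - 1) * (m * m)" using i by (simp add: of_nat_diff)
    finally show "(\<Sum>j\<in>{1..l}. integral\<^sup>L L (\<lambda>a. Z i a * Z j a)) = q + (real l - 1) * (m * m)"
      using EZ2[OF i] by simp
  qed
  also have "\<dots> = real l * (q + (real l - 1) * (m * m))" by simp
  finally have "q = real l * (q + (real l - 1) * (m * m)) / (real l * real l)" .
  then have "real l * (real l * q) = real l * (q + (real l - 1) * (m * m))" using l_pos by (simp add: field_simps)
  then have "real l * q = q + (real l - 1) * (m * m)" using l_pos by (subst (asm) mult_left_cancel) auto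
  then have "(real l - 1) * q = (real l - 1) * (m * m)" by (simp add: algebra_simps)
  then have qm: "q = m * m" using l2 by simp
  have int_sq: "integrable L (\<lambda>a. sr a * sr a)"
    by (rule P.integrable_const_bound[where B=1]) (auto intro!: AE_I2 meas_sr borel_measurable_times mult_le_one sr_nonneg sr_le1 simp: abs_mult)
  have "integral\<^sup>L L (\<lambda>a. (sr a - m)\<^sup>2) = integral\<^sup>L L (\<lambda>a. sr a * sr a - 2 * m * sr a + m * m)"
    by (simp add: power2_eq_square algebra_simps)
  also have "\<dots> = q - 2 * m * m + m * m"
    using int_sq int_sr unfolding q_def m_def by (simp add: P.prob_space)
  also have "\<dots> = 0" using qm by simp
  finally have "integral\<^sup>L L (\<lambda>a. (sr a - m)\<^sup>2) = 0" .
  moreover have "integrable L (\<lambda>a. (sr a - m)\<^sup>2)"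
    using int_sq int_sr by (simp add: power2_eq_square algebra_simps)
  ultimately have "AE a in L. (sr a - m)\<^sup>2 = 0"
    by (subst integral_nonneg_eq_0_iff_AE[symmetric]) auto
  then show ?thesis by (auto elim: eventually_mono)
qed

end



context zo begin

lemma AE_streams: "AE X in SS. X \<in> streams {1..l}"
proof -
  interpret U: prob_space U by (rule U_prob)
  have "AE X in stream_space U. stream_all (\<lambda>x. x \<in> {1..l}) X"
  proof (rule U.AE_stream_all)
    show "Measurable.pred U (\<lambda>x. x \<in> {1..l})" unfolding U_def by (simp add: measurable_def)
    show "AE x in U. x \<in> {1..l}" unfolding U_def using l_pos by (auto simp: AE_measure_pmf_iff)
  qed
  then show ?thesis unfolding SS_def by (auto elim!: eventually_mono simp: streams_iff_sset)
qed

lemma sstart_SS[measurable]: "sstart A v \<in> sets SS"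
  using sets_sstart[of A v] sets_SS by simp

lemma sum_single: assumes "i \<in> {1..l}"
  shows "(\<Sum>j\<in>{1..l}. measure SS {X. j = i \<and> R j X}) = measure SS {X. R i X}"
proof -
  have "(\<Sum>j\<in>{1..l}. measure SS {X. j = i \<and> R j X}) =
        measure SS {X. i = i \<and> R i X} + (\<Sum>j\<in>{1..l} - {i}. measure SS {X. j = i \<and> R j X})"
    using assms by (subst sum.remove[of _ i]) auto
  also have "(\<Sum>j\<in>{1..l} - {i}. measure SS {X. j = i \<and> R j X}) = 0"
    by (intro sum.neutral) auto
  finally show ?thesis by simp
qed

lemma cyl_Cons:
  assumes i: "i \<in> {1..l}" and Q: "{X. Q X} \<in> sets SS"
  shows "measure SS {X. X \<in> sstart {1..l} (i # v) \<and> Q X} = measure SS {X. X \<in> sstart {1..l} v \<and> Q (i ## X)} / l"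
proof -
  have m: "{X. X \<in> sstart {1..l} (i # v) \<and> Q X} \<in> sets SS"
    using sets.Int[OF sstart_SS[of "{1..l}" "i # v"] Q] by (simp add: Int_def)
  have "measure SS {X. X \<in> sstart {1..l} (i # v) \<and> Q X} =
        (\<Sum>j\<in>{1..l}. measure SS {X. j ## X \<in> sstart {1..l} (i # v) \<and> Q (j ## X)}) / l"
    by (rule one_level[OF m])
  also have "(\<Sum>j\<in>{1..l}. measure SS {X. j ## X \<in> sstart {1..l} (i # v) \<and> Q (j ## X)}) =
             (\<Sum>j\<in>{1..l}. measure SS {X. j = i \<and> (X \<in> sstart {1..l} v \<and> Q (j ## X))})"
    by simp
  also have "\<dots> = measure SS {X. X \<in> sstart {1..l} v \<and> Q (i ## X)}"
    by (rule sum_single[OF i])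
  finally show ?thesis .
qed

lemma cyl_measure: "v \<in> lists {1..l} \<Longrightarrow> measure SS (sstart {1..l} v) = 1 / l ^ length v"
proof (induction v)
  case Nil
  interpret S: prob_space SS by (rule SS_prob)
  have "measure SS (streams {1..l}) = measure SS (space SS)"
    by (rule measure_eq_AE) (use AE_streams sstart_SS[of "{1..l}" "[]"] sets.top[of SS] in \<open>auto simp: space_SS\<close>)
  then show ?case by (simp add: S.prob_space)
next
  case (Cons i v)
  have "measure SS (sstart {1..l} (i # v)) = measure SS {X. X \<in> sstart {1..l} (i # v) \<and> True}"
    by (rule arg_cong[where f="measure SS"]) blast
  also have "\<dots> = measure SS {X. X \<in> sstart {1..l} v \<and> True} / l"
    using Cons.prems by (intro cyl_Cons) (auto simp: space_SS[symmetric])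
  also have "\<dots> = 1 / l ^ length (i # v)" using Cons by simp
  finally show ?case .
qed

lemma each_eq:
  fixes x :: "nat \<Rightarrow> real"
  assumes le: "\<And>j. j \<in> {1..l} \<Longrightarrow> x j \<le> c" and avg: "(\<Sum>j\<in>{1..l}. x j) / l = c" and i: "i \<in> {1..l}"
  shows "x i = c"
proof -
  have "(\<Sum>j\<in>{1..l}. x j) = (\<Sum>j\<in>{1..l}. c)" using avg l_pos by (simp add: field_simps)
  then have "(\<Sum>j\<in>{1..l}. c - x j) = 0" by (simp add: sum_subtractf)
  then have "\<forall>j\<in>{1..l}. c - x j = 0" using le by (subst (asm) sum_nonneg_eq_0_iff) auto
  then show ?thesis using i by auto
qed

fun sigl where "sigl [] a = a" | "sigl (i # is) a = sigl is (sig i a)"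

definition "Hm b \<longleftrightarrow> b \<in> space L \<and> (\<forall>is\<in>lists {1..l}. sr (sigl is b) = m)"

lemma Hm_sig: assumes "Hm b" "i \<in> {1..l}" shows "Hm (sig i b)"
proof -
  have "sr (sigl is (sig i b)) = m" if "is \<in> lists {1..l}" for "is"
    using assms that unfolding Hm_def by (metis Cons_in_lists_iff sigl.simps(2))
  then show ?thesis unfolding Hm_def using sig_space by auto
qed

lemma key:
  assumes "v \<in> lists {1..l}" "Hm b" "N \<in> null_sets lborel" "measure (mu b) N = m"
  shows "measure SS {X. X \<in> sstart {1..l} v \<and> F b X \<in> N} = m / l ^ length v"
  using assms
proof (induction v arbitrary: b N)
  case Nil
  have bL: "b \<in> space L" using \<open>Hm b\<close> Hm_def by auto
  have Nb: "N \<in> sets borel" using null_borel \<open>N \<in> null_sets lborel\<close> by blast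
  have "measure SS {X. X \<in> streams {1..l} \<and> F b X \<in> N} = measure SS {X. F b X \<in> N}"
  proof (rule measure_eq_AE)
    show "AE x in SS. (x \<in> {X. X \<in> streams {1..l} \<and> F b X \<in> N}) = (x \<in> {X. F b X \<in> N})"
      using AE_streams by (auto elim: eventually_mono)
    show "{X. F b X \<in> N} \<in> sets SS" by (rule sets_SS_Collect[OF bL Nb])
    show "{X. X \<in> streams {1..l} \<and> F b X \<in> N} \<in> sets SS"
      using sets.Int[OF sstart_SS[of "{1..l}" "[]"] sets_SS_Collect[OF bL Nb]] by (simp add: Int_def)
  qed
  then show ?case using measure_mu[OF bL Nb] \<open>measure (mu b) N = m\<close> by simp
next
  case (Cons i v)
  have bL: "b \<in> space L" and i: "i \<in> {1..l}" and v: "v \<in> lists {1..l}" using Cons Hm_def by auto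
  have Nn: "N \<in> null_sets lborel" and Hb: "Hm b" and mN: "measure (mu b) N = m" using Cons.prems by auto
  have Nb: "N \<in> sets borel" using null_borel[OF Nn] .
  let ?N' = "{x. S i b x \<in> N}"
  have eqm: "measure (mu (sig i b)) ?N' = m"
  proof (rule each_eq[where x="\<lambda>j. measure (mu (sig j b)) {x. S j b x \<in> N}", OF _ _ i])
    fix j assume j: "j \<in> {1..l}"
    have "measure (mu (sig j b)) {x. S j b x \<in> N} \<le> sr (sig j b)"
      by (intro measure_le_sr sig_space S_null Nn)
    also have "sr (sigl [] (sig j b)) = m" using Hm_sig[OF Hb j] unfolding Hm_def by blast
    then have "sr (sig j b) = m" by simp
    finally show "measure (mu (sig j b)) {x. S j b x \<in> N} \<le> m" .
  next
    show "(\<Sum>j\<in>{1..l}. measure (mu (sig j b)) {x. S j b x \<in> N}) / l = m"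
      using mu_rec[OF bL Nb] mN by simp
  qed
  have "measure SS {X. X \<in> sstart {1..l} (i # v) \<and> F b X \<in> N} =
        measure SS {X. X \<in> sstart {1..l} v \<and> F b (i ## X) \<in> N} / l"
    by (rule cyl_Cons[OF i sets_SS_Collect[OF bL Nb]])
  also have "{X. X \<in> sstart {1..l} v \<and> F b (i ## X) \<in> N} = {X. X \<in> sstart {1..l} v \<and> F (sig i b) X \<in> ?N'}"
    by (simp add: F_sig[OF bL i])
  also have "measure SS \<dots> = m / l ^ length v"
    by (rule Cons.IH[OF Hm_sig[OF Hb i] S_null[OF Nn] eqm])
  finally show ?case by simp
qed

end



context zo begin

lemma m_01: assumes "Hm b" shows "m = 0 \<or> m = 1"
proof (rule ccontr)
  assume nz: "\<not> (m = 0 \<or> m = 1)"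
  have bL: "b \<in> space L" using assms Hm_def by auto
  have "sr (sigl [] b) = m" using assms unfolding Hm_def by blast
  then have srb: "sr b = m" by simp
  then have mpos: "m > 0" using sr_nonneg[of b] nz by auto
  obtain N where N: "N \<in> null_sets lborel" "measure (mu b) N = m" using sr_attained[OF bL] srb by auto
  have Nb: "N \<in> sets borel" using null_borel[OF N(1)] .
  interpret S: prob_space SS by (rule SS_prob)
  define E where "E = {X. F b X \<in> N}"
  have Em: "E \<in> sets SS" unfolding E_def by (rule sets_SS_Collect[OF bL Nb])
  have PE: "measure SS E = m" unfolding E_def using measure_mu[OF bL Nb] N(2) by simp
  define M1 where "M1 = density SS (\<lambda>X. ennreal (1 / m) * indicator E X)"
  have dm: "(\<lambda>X. ennreal (1 / m) * indicator E X) \<in> borel_measurable SS" using Em by measurable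
  have em1: "emeasure M1 A = ennreal (1 / m) * emeasure SS (A \<inter> E)" if A: "A \<in> sets SS" for A
  proof -
    have "emeasure M1 A = (\<integral>\<^sup>+X. ennreal (1 / m) * indicator E X * indicator A X \<partial>SS)"
      unfolding M1_def by (rule emeasure_density[OF dm A])
    also have "\<dots> = (\<integral>\<^sup>+X. ennreal (1 / m) * indicator (A \<inter> E) X \<partial>SS)"
      by (intro nn_integral_cong) (auto split: split_indicator)
    also have "\<dots> = ennreal (1 / m) * emeasure SS (A \<inter> E)"
      using A Em by (intro nn_integral_cmult_indicator) auto
    finally show ?thesis .
  qed
  have sM1: "sets M1 = sets SS" unfolding M1_def by simp
  have M1prob: "prob_space M1"
  proof (rule prob_spaceI)
    have "space M1 = space SS" unfolding M1_def by simp
    then have "emeasure M1 (space M1) = ennreal (1 / m) * emeasure SS E"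
      using em1[OF sets.top] Em sets.sets_into_space[OF Em] by (simp add: Int_absorb1)
    also have "\<dots> = ennreal (1 / m) * ennreal m" using PE by (simp add: S.emeasure_eq_measure)
    also have "\<dots> = 1" using mpos by (simp add: ennreal_mult[symmetric])
    finally show "emeasure M1 (space M1) = 1" .
  qed
  have eq: "M1 = SS"
  proof (rule stream_space_eq_sstart[of "{1..l}"])
    show "countable {1..l}" by simp
    show "prob_space M1" by (rule M1prob)
    show "prob_space SS" by (rule SS_prob)
    show "AE x in M1. x \<in> streams {1..l}"
      unfolding M1_def using AE_streams by (subst AE_density[OF dm]) (auto elim: eventually_mono)
    show "AE x in SS. x \<in> streams {1..l}" by (rule AE_streams)
    show "sets M1 = sets (stream_space (count_space UNIV))" using sM1 sets_SS by simp
    show "sets SS = sets (stream_space (count_space UNIV))" by (rule sets_SS)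
    fix v :: "nat list" assume v: "v \<in> lists {1..l}"
    have "sstart {1..l} v \<inter> E = {X. X \<in> sstart {1..l} v \<and> F b X \<in> N}" unfolding E_def by auto
    then have "measure SS (sstart {1..l} v \<inter> E) = m / l ^ length v"
      using key[OF v assms N] by simp
    then have "emeasure M1 (sstart {1..l} v) = ennreal (1 / m) * ennreal (m / l ^ length v)"
      using em1[OF sstart_SS] by (simp add: S.emeasure_eq_measure)
    also have "\<dots> = ennreal (1 / l ^ length v)"
      using mpos by (simp add: ennreal_mult[symmetric])
    also have "\<dots> = emeasure SS (sstart {1..l} v)"
      using cyl_measure[OF v] by (simp add: S.emeasure_eq_measure)
    finally show "emeasure M1 (sstart {1..l} v) = emeasure SS (sstart {1..l} v)" .
  qed
  have Cm: "space SS - E \<in> sets SS" using Em by auto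
  have "(space SS - E) \<inter> E = {}" by auto
  then have "emeasure M1 (space SS - E) = 0" using em1[OF Cm] by simp
  moreover have "emeasure SS (space SS - E) = ennreal (1 - m)"
    using S.prob_compl[OF Em] PE S.emeasure_eq_measure by simp
  ultimately have "ennreal (1 - m) = 0" using eq by simp
  moreover have "m < 1"
  proof -
    have "measure (mu b) N \<le> 1" by (rule prob_space.prob_le_1[OF mu_prob[OF bL]])
    then show ?thesis using N(2) nz by linarith
  qed
  ultimately show False by simp
qed

lemma AE_Hm: "AE b in L. Hm b"
proof -
  have cl: "countable (lists {1..l :: nat})" by (rule countable_lists) simp
  have "AE b in L. sr (sigl is b) = m" if "is \<in> lists {1..l}" for "is"
    using that
  proof (induction "is")
    case Nil then show ?case using sr_const by simp
  next
    case (Cons i "is")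
    have i: "i \<in> {1..l}" using Cons by simp
    have "AE b in distr L L (sig i). sr (sigl is b) = m" unfolding distr_sig[OF i] using Cons by simp
    then have "AE b in L. sr (sigl is (sig i b)) = m"
      by (rule AE_distrD[OF meas_sig[OF i]])
    then show ?case by simp
  qed
  then have "AE b in L. \<forall>is\<in>lists {1..l}. sr (sigl is b) = m"
    by (subst AE_ball_countable[OF cl]) auto
  then show ?thesis unfolding Hm_def by (auto elim: eventually_mono)
qed

theorem main: "(AE a in L. absolutely_continuous lborel (random_measure l lam a))
       \<or> (AE a in L. singular_lebesgue (random_measure l lam a))"
proof -
  interpret P: prob_space L by (rule L_prob)
  have "\<exists>b. Hm b"
  proof (rule ccontr)
    assume "\<not> (\<exists>b. Hm b)"
    then have "AE b in L. False" using AE_Hm by (auto elim: eventually_mono)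
    then show False by (simp add: P.AE_False)
  qed
  then obtain b where "Hm b" by blast
  then have m01: "m = 0 \<or> m = 1" by (rule m_01)
  have AEc: "AE a in L. good a \<and> sr a = m" using AE_good sr_const by auto
  show ?thesis
  proof (cases "m = 0")
    case True
    have "absolutely_continuous lborel (random_measure l lam a)" if "good a" "sr a = m" for a
    proof -
      have aL: "a \<in> space L" using that good_def by auto
      have "N \<in> null_sets (mu a)" if N: "N \<in> null_sets lborel" for N
      proof -
        have "emeasure (mu a) N \<le> s a" by (rule emeasure_le_s[OF N])
        also have "\<dots> = 0" using s_eq[OF aL] \<open>sr a = m\<close> True by simp
        finally show ?thesis using null_borel[OF N] by auto
      qed
      then show ?thesis unfolding absolutely_continuous_def mu_eq[OF that(1)] by auto
    qed
    then have "AE a in L. absolutely_continuous lborel (random_measure l lam a)"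
      using AEc by (auto elim: eventually_mono)
    then show ?thesis ..
  next
    case False
    then have m1: "m = 1" using m01 by simp
    have "singular_lebesgue (random_measure l lam a)" if "good a" "sr a = m" for a
    proof -
      have aL: "a \<in> space L" using that good_def by auto
      interpret Q: prob_space "mu a" by (rule mu_prob[OF aL])
      obtain N where N0: "N \<in> null_sets lborel" "measure (mu a) N = sr a" using sr_attained[OF aL] by blast
      have N: "N \<in> null_sets lborel" "measure (mu a) N = 1" using N0 that(2) m1 by auto
      have Nb: "N \<in> sets borel" using null_borel[OF N(1)] .
      have "emeasure (mu a) (UNIV - N) = 0"
      proof -
        have "UNIV - N = space (mu a) - N" by (simp add: mu_def)
        then show ?thesis using Q.prob_compl[of N] Nb N(2) Q.emeasure_eq_measure by simp
      qed
      then show ?thesis unfolding singular_lebesgue_def mu_eq[OF that(1)]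
        using Nb N(1) by (intro bexI[of _ N]) auto
    qed
    then have "AE a in L. singular_lebesgue (random_measure l lam a)"
      using AEc by (auto elim: eventually_mono)
    then show ?thesis ..
  qed
qed

end

theorem proposition2p3:
  fixes l :: nat and eta :: "real pmf" and lam :: real
  assumes "l \<ge> 2"
    and "finite (set_pmf eta)"
    and "0 < lam" and "lam < 1"
  shows "(AE a in label_space l eta. absolutely_continuous lborel (random_measure l lam a))
       \<or> (AE a in label_space l eta. singular_lebesgue (random_measure l lam a))"
proof -
  interpret zo l eta lam using assms by unfold_locales
  show ?thesis using main unfolding L_def .
qed


end
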